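(* Up to isomorphism there is exactly one two-dimensional evolution algebra $A$ over a field $\mathbb{K}$ such that $A^3\neq0$, $(A^2)^2\neq0$ and the annihilator $\mathrm{Ann}(A)=\{a\in A: aA=0\}$ is nonzero. Its square is $\mathfrak{D}_7\cup\mathfrak{D}_9$.
   Context: An evolution algebra over $\mathbb{K}$ is a $\mathbb{K}$-algebra with a basis $\{e_i\}$ (natural basis) such that $e_ie_j=0$ for $i\neq j$. $A^2$ is the span of $\{xy:x,y\in A\}$, $A^3$ the span of $\{xy:x\in A,y\in A^2\}$, $(A^2)^2$ the span of $\{xy:x,y\in A^2\}$. For a natural basis $\{e_1,e_2\}$ with $e_1^2=\omega_{11}e_1+\omega_{21}e_2$, $e_2^2=\omega_{12}e_1+\omega_{22}e_2$, its pseudo-square is the subset of $\{L,T,R,D\}$ where $L,T,R,D$ are present iff $\omega_{11},\omega_{12},\omega_{22},\omega_{21}$ respectively are nonzero; the square of $A$ is the set of pseudo-squares of all natural bases; $\mathfrak{D}_7=\{\{L\},\{R\}\}$, $\mathfrak{D}_9=\{\{L,D\},\{T,R\}\}$. *)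

theory Defs
  imports Complex_Main "HOL-Library.Product_Plus"
begin

definition is_algebra :: "('k::field \<Rightarrow> 'v::ab_group_add \<Rightarrow> 'v) \<Rightarrow> ('v \<Rightarrow> 'v \<Rightarrow> 'v) \<Rightarrow> bool" where
  "is_algebra s m \<longleftrightarrow> vector_space s \<and>
     (\<forall>x y z. m (x + y) z = m x z + m y z) \<and>
     (\<forall>x y z. m x (y + z) = m x y + m x z) \<and>
     (\<forall>c x y. m (s c x) y = s c (m x y)) \<and>
     (\<forall>c x y. m x (s c y) = s c (m x y))"

definition evolution_algebra :: "('k::field \<Rightarrow> 'v::ab_group_add \<Rightarrow> 'v) \<Rightarrow> ('v \<Rightarrow> 'v \<Rightarrow> 'v) \<Rightarrow> bool" where
  "evolution_algebra s m \<longleftrightarrow> is_algebra s m \<and>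
     (\<exists>B. \<not> module.dependent s B \<and> module.span s B = UNIV \<and>
          (\<forall>x\<in>B. \<forall>y\<in>B. x \<noteq> y \<longrightarrow> m x y = 0))"

definition natural_basis2 :: "('k::field \<Rightarrow> 'v::ab_group_add \<Rightarrow> 'v) \<Rightarrow> ('v \<Rightarrow> 'v \<Rightarrow> 'v) \<Rightarrow> 'v \<Rightarrow> 'v \<Rightarrow> bool" where
  "natural_basis2 s m e1 e2 \<longleftrightarrow> e1 \<noteq> e2 \<and> \<not> module.dependent s {e1, e2} \<and>
     module.span s {e1, e2} = UNIV \<and> m e1 e2 = 0 \<and> m e2 e1 = 0"

definition alg_sq :: "('k::field \<Rightarrow> 'v::ab_group_add \<Rightarrow> 'v) \<Rightarrow> ('v \<Rightarrow> 'v \<Rightarrow> 'v) \<Rightarrow> 'v set" where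
  "alg_sq s m = module.span s {m x y | x y. True}"

definition alg_cube :: "('k::field \<Rightarrow> 'v::ab_group_add \<Rightarrow> 'v) \<Rightarrow> ('v \<Rightarrow> 'v \<Rightarrow> 'v) \<Rightarrow> 'v set" where
  "alg_cube s m = module.span s {m x y | x y. y \<in> alg_sq s m}"

definition alg_sq_sq :: "('k::field \<Rightarrow> 'v::ab_group_add \<Rightarrow> 'v) \<Rightarrow> ('v \<Rightarrow> 'v \<Rightarrow> 'v) \<Rightarrow> 'v set" where
  "alg_sq_sq s m = module.span s {m x y | x y. x \<in> alg_sq s m \<and> y \<in> alg_sq s m}"

definition annihilator :: "('v \<Rightarrow> 'v \<Rightarrow> 'v::ab_group_add) \<Rightarrow> 'v set" where
  "annihilator m = {a. \<forall>x. m a x = 0}"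

definition alg_isomorphic :: "('k::field \<Rightarrow> 'v::ab_group_add \<Rightarrow> 'v) \<Rightarrow> ('v \<Rightarrow> 'v \<Rightarrow> 'v)
    \<Rightarrow> ('k \<Rightarrow> 'w::ab_group_add \<Rightarrow> 'w) \<Rightarrow> ('w \<Rightarrow> 'w \<Rightarrow> 'w) \<Rightarrow> bool" where
  "alg_isomorphic s m s' m' \<longleftrightarrow>
     (\<exists>f. bij f \<and> Vector_Spaces.linear s s' f \<and> (\<forall>x y. f (m x y) = m' (f x) (f y)))"

datatype letter = L | T | R | D

text \<open>Pseudo-square of the ordered natural basis (e1,e2), with
  e1^2 = w11 e1 + w21 e2, e2^2 = w12 e1 + w22 e2.\<close>
definition pseudo_square :: "('k::field \<Rightarrow> 'v::ab_group_add \<Rightarrow> 'v) \<Rightarrow> ('v \<Rightarrow> 'v \<Rightarrow> 'v) \<Rightarrow> 'v \<Rightarrow> 'v \<Rightarrow> letter set" where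
  "pseudo_square s m e1 e2 =
     (let w = module.representation s {e1, e2} in
       {X. (X = L \<and> w (m e1 e1) e1 \<noteq> 0) \<or> (X = T \<and> w (m e2 e2) e1 \<noteq> 0) \<or>
           (X = R \<and> w (m e2 e2) e2 \<noteq> 0) \<or> (X = D \<and> w (m e1 e1) e2 \<noteq> 0)})"

definition square_of :: "('k::field \<Rightarrow> 'v::ab_group_add \<Rightarrow> 'v) \<Rightarrow> ('v \<Rightarrow> 'v \<Rightarrow> 'v) \<Rightarrow> letter set set" where
  "square_of s m = {pseudo_square s m e1 e2 | e1 e2. natural_basis2 s m e1 e2}"

definition D7 :: "letter set set" where "D7 = {{L}, {R}}"
definition D9 :: "letter set set" where "D9 = {{L, D}, {T, R}}"

definition cor_hyps :: "('k::field \<Rightarrow> 'v::ab_group_add \<Rightarrow> 'v) \<Rightarrow> ('v \<Rightarrow> 'v \<Rightarrow> 'v) \<Rightarrow> bool" where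
  "cor_hyps s m \<longleftrightarrow> evolution_algebra s m \<and> vector_space.dim s UNIV = 2 \<and>
     alg_cube s m \<noteq> {0} \<and> alg_sq_sq s m \<noteq> {0} \<and> annihilator m \<noteq> {0}"

definition pscale :: "'k::field \<Rightarrow> 'k \<times> 'k \<Rightarrow> 'k \<times> 'k" where
  "pscale c p = (c * fst p, c * snd p)"

end

theory Submission
  imports Defs
begin

definition M0 :: "'k::field \<times> 'k \<Rightarrow> 'k \<times> 'k \<Rightarrow> 'k \<times> 'k" where
  "M0 x y = (fst x * fst y, 0)"

lemma vs_pscale: "vector_space (pscale :: 'k::field \<Rightarrow> _)"
  by unfold_locales (auto simp: pscale_def algebra_simps)

lemma iso_from_inv:
  fixes h :: "'k::field \<times> 'k \<Rightarrow> 'v::ab_group_add"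
  assumes vs: "vector_space s" and b: "bij h"
    and add: "\<And>x y. h (x + y) = h x + h y" and sc: "\<And>c x. h (pscale c x) = s c (h x)"
    and mul: "\<And>x y. h (M0 x y) = m (h x) (h y)"
  shows "alg_isomorphic s m pscale M0"
  unfolding alg_isomorphic_def
proof (intro exI[of _ "inv h"] conjI allI)
  show "bij (inv h)" using b by (rule bij_imp_bij_inv)
  have hi: "h (inv h x) = x" for x using b by (simp add: bij_is_surj surj_f_inv_f)
  have ih: "inv h (h x) = x" for x using b by (simp add: bij_is_inj)
  show "Vector_Spaces.linear s pscale (inv h)" unfolding Vector_Spaces.linear_iff
  proof (intro conjI allI)
    show "vector_space s" by fact
    show "vector_space (pscale :: 'k \<Rightarrow> _)" by (rule vs_pscale)
    fix x y c
    show "inv h (x + y) = inv h x + inv h y"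
      by (metis add hi ih)
    show "inv h (s c x) = pscale c (inv h x)"
      by (metis sc hi ih)
  qed
  fix x y
  show "inv h (m x y) = M0 (inv h x) (inv h y)"
    by (metis mul hi ih)
qed

locale alg2 = vector_space s for s :: "'k::field \<Rightarrow> 'v::ab_group_add \<Rightarrow> 'v" (infixr \<open>*s\<close> 75) +
  fixes m :: "'v \<Rightarrow> 'v \<Rightarrow> 'v"
  assumes addL: "m (x + y) z = m x z + m y z"
  and addR: "m x (y + z) = m x y + m x z"
  and scL: "m (c *s x) y = c *s m x y"
  and scR: "m x (c *s y) = c *s m x y"
begin

lemma m0L[simp]: "m 0 y = 0"
  using addL[of 0 0 y] by simp
lemma m0R[simp]: "m y 0 = 0"
  using addR[of y 0 0] by simp

lemma indep2:
  assumes "u \<noteq> v"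
  shows "independent {u, v} \<longleftrightarrow> (\<forall>a b. a *s u + b *s v = 0 \<longrightarrow> a = 0 \<and> b = 0)"
proof -
  have "dependent {u, v} \<longleftrightarrow> (\<exists>f. (\<exists>w \<in> {u,v}. f w \<noteq> 0) \<and> (\<Sum>w\<in>{u,v}. f w *s w) = 0)"
    by (rule dependent_finite) simp
  also have "\<dots> \<longleftrightarrow> (\<exists>a b. (a \<noteq> 0 \<or> b \<noteq> 0) \<and> a *s u + b *s v = 0)"
  proof
    assume "\<exists>f. (\<exists>w \<in> {u,v}. f w \<noteq> 0) \<and> (\<Sum>w\<in>{u,v}. f w *s w) = 0"
    then obtain f where "(\<exists>w \<in> {u,v}. f w \<noteq> 0)" "(\<Sum>w\<in>{u,v}. f w *s w) = 0" by blast
    then show "\<exists>a b. (a \<noteq> 0 \<or> b \<noteq> 0) \<and> a *s u + b *s v = 0"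
      using assms by (intro exI[of _ "f u"] exI[of _ "f v"]) auto
  next
    assume "\<exists>a b. (a \<noteq> 0 \<or> b \<noteq> 0) \<and> a *s u + b *s v = 0"
    then obtain a b where "(a \<noteq> 0 \<or> b \<noteq> 0)" "a *s u + b *s v = 0" by blast
    then show "\<exists>f. (\<exists>w \<in> {u,v}. f w \<noteq> 0) \<and> (\<Sum>w\<in>{u,v}. f w *s w) = 0"
      using assms by (intro exI[of _ "\<lambda>w. if w = u then a else b"]) auto
  qed
  finally show ?thesis by blast
qed

lemma lc0:
  assumes "u \<noteq> v" "independent {u, v}"
  shows "a *s u + b *s v = 0 \<longleftrightarrow> a = 0 \<and> b = 0"
  using indep2[OF assms(1)] assms(2) by auto

lemma span2: "span {u, v} = {a *s u + b *s v | a b. True}"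
  unfolding span_insert span_singleton
proof (auto)
  fix x k ka assume "x - k *s u = ka *s v"
  then have "x = k *s u + ka *s v" by (metis add.commute diff_add_cancel)
  then show "\<exists>a b. x = a *s u + b *s v" by blast
next
  fix a b show "\<exists>k ka. a *s u + b *s v - k *s u = ka *s v"
    by (intro exI[of _ a] exI[of _ b]) simp
qed

lemma span2_UNIV: "span {u, v} = UNIV \<longleftrightarrow> (\<forall>x. \<exists>a b. x = a *s u + b *s v)"
proof
  assume "span {u, v} = UNIV"
  then have "\<And>x. x \<in> span {u, v}" by simp
  then show "\<forall>x. \<exists>a b. x = a *s u + b *s v" unfolding span2 by blast
next
  assume "\<forall>x. \<exists>a b. x = a *s u + b *s v"
  then show "span {u, v} = UNIV" unfolding span2 by blast
qed

lemma lc_add: "(a *s u + b *s v) + (c *s u + d *s v) = (a+c) *s u + (b+d) *s v"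
  by (simp add: algebra_simps)
lemma lc_scale: "k *s (a *s u + b *s v) = (k*a) *s u + (k*b) *s v"
  by (simp add: algebra_simps)
lemma lc_eq: "a = c \<Longrightarrow> b = d \<Longrightarrow> a *s u + b *s v = c *s u + d *s v"
  by simp

lemma repr2:
  assumes "u \<noteq> v" "independent {u, v}"
  shows "representation {u, v} (a *s u + b *s v) u = a \<and> representation {u, v} (a *s u + b *s v) v = b"
proof -
  define x where "x = a *s u + b *s v"
  define r where "r = representation {u, v} x"
  have "x \<in> span {u, v}" unfolding span2 x_def by blast
  then have "(\<Sum>w\<in>{u,v}. r w *s w) = x" unfolding r_def
    by (intro sum_representation_eq) (use assms in auto)
  then have "r u *s u + r v *s v = a *s u + b *s v" using assms(1) x_def by simp
  then have "(r u - a) *s u + (r v - b) *s v = 0" by (simp add: algebra_simps)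
  then have "r u - a = 0 \<and> r v - b = 0" using lc0[OF assms] by blast
  then show ?thesis unfolding r_def x_def by simp
qed

lemma ps_compute:
  assumes "u \<noteq> v" "independent {u, v}" "m u u = a1 *s u + a2 *s v" "m v v = b1 *s u + b2 *s v"
  shows "pseudo_square s m u v = {X. X = L \<and> a1 \<noteq> 0 \<or> X = T \<and> b1 \<noteq> 0 \<or> X = R \<and> b2 \<noteq> 0 \<or> X = D \<and> a2 \<noteq> 0}"
  unfolding pseudo_square_def Let_def
  using repr2[OF assms(1,2), of a1 a2] repr2[OF assms(1,2), of b1 b2] assms(3,4) by simp

lemma mul2:
  assumes "m e1 e2 = 0" "m e2 e1 = 0"
  shows "m (a *s e1 + b *s e2) (c *s e1 + d *s e2) = (a*c) *s m e1 e1 + (b*d) *s m e2 e2"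
  using assms by (simp add: addL addR scL scR mult.commute)

lemma nb_sym: "natural_basis2 s m u v \<Longrightarrow> natural_basis2 s m v u"
  unfolding natural_basis2_def by (auto simp: insert_commute)

lemma normal_cor_hyps:
  assumes nb: "natural_basis2 s m f1 f2" "m f1 f1 = f1" "m f2 f2 = 0"
  shows "cor_hyps s m"
proof -
  from nb have d: "f1 \<noteq> f2" "independent {f1,f2}" "span {f1,f2} = UNIV" "m f1 f2 = 0" "m f2 f1 = 0"
    by (auto simp: natural_basis2_def)
  have alg: "is_algebra s m" unfolding is_algebra_def
    using vector_space_axioms by (simp add: addL addR scL scR)
  have ev: "evolution_algebra s m" unfolding evolution_algebra_def
    using alg d by (intro conjI exI[of _ "{f1,f2}"]) auto
  have dim: "dim UNIV = 2" using dim_eq_card[of "{f1,f2}" UNIV] d by simp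
  have f1nz: "f1 \<noteq> 0" using lc0[OF d(1,2), of 1 0] by auto
  have f2nz: "f2 \<noteq> 0" using lc0[OF d(1,2), of 0 1] by auto
  have f1sq: "f1 \<in> alg_sq s m" unfolding alg_sq_def
    by (rule span_base) (use nb in \<open>metis (mono_tags, lifting) mem_Collect_eq\<close>)
  have "f1 \<in> {m x y |x y. y \<in> alg_sq s m}" using f1sq nb(2) by (metis (mono_tags, lifting) mem_Collect_eq)
  then have "f1 \<in> alg_cube s m" unfolding alg_cube_def by (rule span_base)
  then have c: "alg_cube s m \<noteq> {0}" using f1nz by auto
  have "f1 \<in> {m x y |x y. x \<in> alg_sq s m \<and> y \<in> alg_sq s m}" using f1sq nb(2) by (metis (mono_tags, lifting) mem_Collect_eq)
  then have "f1 \<in> alg_sq_sq s m" unfolding alg_sq_sq_def by (rule span_base)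
  then have c2: "alg_sq_sq s m \<noteq> {0}" using f1nz by auto
  have "f2 \<in> annihilator m" unfolding annihilator_def
  proof (safe)
    fix x
    obtain a b where "x = a *s f1 + b *s f2" using d(3) span2_UNIV by blast
    then show "m f2 x = 0" using d nb by (simp add: addR scR)
  qed
  then have "annihilator m \<noteq> {0}" using f2nz by auto
  then show ?thesis unfolding cor_hyps_def using ev dim c c2 by simp
qed

lemma key:
  assumes d: "e1 \<noteq> e2" "independent {e1,e2}" "span {e1,e2} = UNIV" "m e1 e2 = 0" "m e2 e1 = 0"
    and e2sq: "m e2 e2 = 0" and cube: "alg_cube s m \<noteq> {0}"
  shows "\<exists>f1 f2. natural_basis2 s m f1 f2 \<and> m f1 f1 = f1 \<and> m f2 f2 = 0"
proof -
  have all: "\<And>x. \<exists>a b. x = a *s e1 + b *s e2" using d(3) span2_UNIV by blast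
  obtain p q where pq: "m e1 e1 = p *s e1 + q *s e2" using all by blast
  have mxy: "\<exists>k. m x y = k *s m e1 e1" for x y
  proof -
    obtain a b where x: "x = a *s e1 + b *s e2" using all by blast
    obtain c d where y: "y = c *s e1 + d *s e2" using all by blast
    show ?thesis unfolding x y mul2[OF d(4,5)] e2sq by auto
  qed
  have "p \<noteq> 0"
  proof
    assume p0: "p = 0"
    have sq: "alg_sq s m \<subseteq> span {e2}" unfolding alg_sq_def
    proof (rule span_minimal[OF _ subspace_span], safe)
      fix x y
      obtain k where "m x y = k *s m e1 e1" using mxy by blast
      then have "m x y = (k*q) *s e2" using pq p0 by simp
      then show "m x y \<in> span {e2}" unfolding span_singleton by (metis rangeI)
    qed
    have "alg_cube s m \<subseteq> span {0}" unfolding alg_cube_def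
    proof (rule span_mono, rule subsetI)
      fix z assume "z \<in> {m x y |x y. y \<in> alg_sq s m}"
      then obtain x y where z: "z = m x y" and "y \<in> alg_sq s m" by blast
      then obtain k where y: "y = k *s e2" using sq unfolding span_singleton by auto
      obtain a b where x: "x = a *s e1 + b *s e2" using all by blast
      have h1: "m x y = 0" unfolding x y using d e2sq by (simp add: addL scL scR)
      then show "z \<in> {0}" using z by simp
    qed
    then have "alg_cube s m \<subseteq> {0}" by (simp add: span_singleton)
    moreover have "0 \<in> alg_cube s m" unfolding alg_cube_def by (rule span_zero)
    ultimately show False using cube by blast
  qed
  define f1 where "f1 = (1/p) *s e1 + (q/p^2) *s e2"
  have comb: "a *s f1 + b *s e2 = (a/p) *s e1 + (a*q/p^2 + b) *s e2" for a b
    unfolding f1_def by (simp add: algebra_simps)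
  have "m f1 f1 = ((1/p)*(1/p)) *s m e1 e1" unfolding f1_def mul2[OF d(4,5)] e2sq by simp
  also have "\<dots> = f1" unfolding pq lc_scale f1_def
    by (rule lc_eq) (use \<open>p \<noteq> 0\<close> in \<open>simp_all add: field_simps power2_eq_square\<close>)
  finally have f1sq: "m f1 f1 = f1" .
  have e2: "e2 = 0 *s e1 + 1 *s e2" by simp
  have m12: "m f1 e2 = 0" unfolding f1_def by (subst e2, subst mul2[OF d(4,5)]) (simp add: e2sq)
  have m21: "m e2 f1 = 0" unfolding f1_def by (subst e2, subst mul2[OF d(4,5)]) (simp add: e2sq)
  have ne: "f1 \<noteq> e2"
  proof
    assume "f1 = e2"
    then have "1 *s f1 + (-1) *s e2 = 0" by simp
    then have "(1/p) *s e1 + (1*q/p^2 + -1) *s e2 = 0" unfolding comb .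
    then show False using lc0[OF d(1,2)] \<open>p \<noteq> 0\<close> by simp
  qed
  have ind: "independent {f1, e2}" unfolding indep2[OF ne]
  proof (intro allI impI)
    fix a b assume "a *s f1 + b *s e2 = 0"
    then have "(a/p) *s e1 + (a*q/p^2 + b) *s e2 = 0" unfolding comb .
    then have "a/p = 0 \<and> a*q/p^2 + b = 0" using lc0[OF d(1,2)] by blast
    then show "a = 0 \<and> b = 0" using \<open>p \<noteq> 0\<close> by auto
  qed
  have sp: "span {f1, e2} = UNIV" unfolding span2_UNIV
  proof
    fix x
    obtain a b where x: "x = a *s e1 + b *s e2" using all by blast
    have "x = (a*p) *s f1 + (b - a*q/p) *s e2" unfolding comb x
      by (rule lc_eq) (use \<open>p \<noteq> 0\<close> in \<open>simp_all add: field_simps power2_eq_square\<close>)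
    then show "\<exists>a b. x = a *s f1 + b *s e2" by blast
  qed
  have "natural_basis2 s m f1 e2" unfolding natural_basis2_def using ne ind sp m12 m21 by simp
  then show ?thesis using f1sq e2sq by blast
qed

lemma normal_form:
  assumes h: "cor_hyps s m"
  shows "\<exists>f1 f2. natural_basis2 s m f1 f2 \<and> m f1 f1 = f1 \<and> m f2 f2 = 0"
proof -
  from h obtain B where B: "independent B" "span B = UNIV" "\<forall>x\<in>B. \<forall>y\<in>B. x \<noteq> y \<longrightarrow> m x y = 0"
    unfolding cor_hyps_def evolution_algebra_def by blast
  have "dim UNIV = card B" using dim_eq_card[of B UNIV] B by simp
  then have "card B = 2" using h unfolding cor_hyps_def by simp
  then obtain b1 b2 where b: "B = {b1, b2}" "b1 \<noteq> b2" by (meson card_2_iff)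
  have d: "independent {b1,b2}" "span {b1,b2} = UNIV" "m b1 b2 = 0" "m b2 b1 = 0"
    using B b by auto
  have d': "independent {b2,b1}" "span {b2,b1} = UNIV"
    using d by (simp_all add: insert_commute)
  have "0 \<in> annihilator m" unfolding annihilator_def by simp
  then obtain x where x: "x \<in> annihilator m" "x \<noteq> 0" using h unfolding cor_hyps_def by blast
  obtain a c where xc: "x = a *s b1 + c *s b2" using d(2) span2_UNIV by blast
  have "m x b1 = a *s m b1 b1" unfolding xc using d by (simp add: addL scL)
  then have 1: "a = 0 \<or> m b1 b1 = 0" using x(1) unfolding annihilator_def by simp
  have "m x b2 = c *s m b2 b2" unfolding xc using d by (simp add: addL scL)
  then have 2: "c = 0 \<or> m b2 b2 = 0" using x(1) unfolding annihilator_def by simp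
  have cube: "alg_cube s m \<noteq> {0}" using h unfolding cor_hyps_def by simp
  show ?thesis
  proof (cases "a = 0")
    case True
    then have "c \<noteq> 0" using x(2) xc by auto
    then have "m b2 b2 = 0" using 2 by simp
    then show ?thesis using key[OF b(2) d _ cube] by blast
  next
    case False
    then have "m b1 b1 = 0" using 1 by simp
    then show ?thesis using key[of b2 b1] b(2) d d' cube by blast
  qed
qed

lemma iso_normal:
  assumes nb: "natural_basis2 s m f1 f2" "m f1 f1 = f1" "m f2 f2 = 0"
  shows "alg_isomorphic s m pscale M0"
proof -
  from nb have d: "f1 \<noteq> f2" "independent {f1,f2}" "span {f1,f2} = UNIV" "m f1 f2 = 0" "m f2 f1 = 0"
    by (auto simp: natural_basis2_def)
  define h where "h p = fst p *s f1 + snd p *s f2" for p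
  have "inj h"
  proof (rule injI)
    fix x y assume "h x = h y"
    then have "(fst x - fst y) *s f1 + (snd x - snd y) *s f2 = 0"
      unfolding h_def by (simp add: algebra_simps)
    then show "x = y" using lc0[OF d(1,2)] by (simp add: prod_eq_iff)
  qed
  moreover have "surj h"
    unfolding surj_def
  proof
    fix x
    obtain a b where "x = a *s f1 + b *s f2" using d(3) span2_UNIV by blast
    then have "x = h (a, b)" unfolding h_def by simp
    then show "\<exists>y. x = h y" by blast
  qed
  ultimately have "bij h" by (simp add: bij_def)
  then show ?thesis
  proof (rule iso_from_inv[OF vector_space_axioms])
    show "h (x + y) = h x + h y" for x y unfolding h_def by (simp add: algebra_simps)
    show "h (pscale c x) = c *s h x" for c x unfolding h_def pscale_def by (simp add: algebra_simps)
    show "h (M0 x y) = m (h x) (h y)" for x y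
      unfolding h_def M0_def mul2[OF d(4,5)] nb(2,3) by simp
  qed
qed

lemma square_normal:
  assumes nb: "natural_basis2 s m f1 f2" "m f1 f1 = f1" "m f2 f2 = 0"
  shows "square_of s m = D7 \<union> D9"
proof -
  from nb have d: "f1 \<noteq> f2" "independent {f1,f2}" "span {f1,f2} = UNIV" "m f1 f2 = 0" "m f2 f1 = 0"
    by (auto simp: natural_basis2_def)
  have f1nz: "f1 \<noteq> 0" using lc0[OF d(1,2), of 1 0] by auto
  have all: "\<And>x. \<exists>a b. x = a *s f1 + b *s f2" using d(3) span2_UNIV by blast
  have mm: "m (a *s f1 + b *s f2) (c *s f1 + e *s f2) = (a*c) *s f1" for a b c e
    unfolding mul2[OF d(4,5)] nb(2,3) by simp
  have sub: "pseudo_square s m u v \<in> D7 \<union> D9" if ub: "natural_basis2 s m u v" for u v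
  proof -
    from ub have du: "u \<noteq> v" "independent {u,v}" "m u v = 0"
      by (auto simp: natural_basis2_def)
    obtain a b where u: "u = a *s f1 + b *s f2" using all by blast
    obtain c e where v: "v = c *s f1 + e *s f2" using all by blast
    have "(a*c) *s f1 = 0" using du(3) mm unfolding u v by simp
    then have ac: "a = 0 \<or> c = 0" using f1nz by simp
    have uu: "m u u = (a*a) *s f1" unfolding u mm ..
    have vv: "m v v = (c*c) *s f1" unfolding v mm ..
    show ?thesis
    proof (cases "a = 0")
      case True
      have "b \<noteq> 0"
      proof
        assume "b = 0" then have "u = 0" using u True by simp
        then have "1 *s u + 0 *s v = 0" by simp
        then show False using lc0[OF du(1,2), of 1 0] by simp
      qed
      have "c \<noteq> 0"
      proof
        assume "c = 0"
        have "e *s u + (-b) *s v = (e*a + -b*c) *s f1 + (e*b + -b*e) *s f2"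
          unfolding u v lc_scale lc_add by (simp add: algebra_simps)
        also have "\<dots> = 0" using True \<open>c = 0\<close> by simp
        finally show False using lc0[OF du(1,2), of e "-b"] \<open>b \<noteq> 0\<close> by simp
      qed
      have uu': "m u u = 0 *s u + 0 *s v" using uu True by simp
      have "(-(c*e/b)) *s u + c *s v = ((-(c*e/b))*a + c*c) *s f1 + ((-(c*e/b))*b + c*e) *s f2"
        unfolding u v lc_scale lc_add by simp
      also have "\<dots> = (c*c) *s f1 + 0 *s f2" using True \<open>b \<noteq> 0\<close> by simp
      finally have vv': "m v v = (-(c*e/b)) *s u + c *s v" using vv by simp
      have "pseudo_square s m u v = (if e = 0 then {R} else {T, R})"
        unfolding ps_compute[OF du(1,2) uu' vv'] using \<open>b \<noteq> 0\<close> \<open>c \<noteq> 0\<close> by auto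
      then show ?thesis by (simp add: D7_def D9_def)
    next
      case False
      then have c0: "c = 0" using ac by simp
      have "e \<noteq> 0"
      proof
        assume "e = 0" then have "v = 0" using v c0 by simp
        then have "0 *s u + 1 *s v = 0" by simp
        then show False using lc0[OF du(1,2), of 0 1] by simp
      qed
      have vv': "m v v = 0 *s u + 0 *s v" using vv c0 by simp
      have "a *s u + (-(a*b/e)) *s v = (a*a + (-(a*b/e))*c) *s f1 + (a*b + (-(a*b/e))*e) *s f2"
        unfolding u v lc_scale lc_add by simp
      also have "\<dots> = (a*a) *s f1 + 0 *s f2" using c0 \<open>e \<noteq> 0\<close> by simp
      finally have uu': "m u u = a *s u + (-(a*b/e)) *s v" using uu by simp
      have "pseudo_square s m u v = (if b = 0 then {L} else {L, D})"
        unfolding ps_compute[OF du(1,2) uu' vv'] using \<open>e \<noteq> 0\<close> False by auto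
      then show ?thesis by (simp add: D7_def D9_def)
    qed
  qed
  define g where "g = f1 + f2"
  have g: "g = 1 *s f1 + 1 *s f2" unfolding g_def by simp
  have gne: "g \<noteq> f2" using f1nz unfolding g_def by auto
  have gind: "independent {g, f2}" unfolding indep2[OF gne]
  proof (intro allI impI)
    fix a b assume "a *s g + b *s f2 = 0"
    then have "a *s f1 + (a + b) *s f2 = 0" unfolding g_def by (simp add: algebra_simps)
    then show "a = 0 \<and> b = 0" using lc0[OF d(1,2)] by auto
  qed
  have gsp: "span {g, f2} = UNIV" unfolding span2_UNIV
  proof
    fix x
    obtain a b where x: "x = a *s f1 + b *s f2" using all by blast
    have "x = a *s g + (b - a) *s f2" unfolding x g_def by (simp add: algebra_simps)
    then show "\<exists>a b. x = a *s g + b *s f2" by blast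
  qed
  have gg: "m g g = f1" unfolding g_def using d nb by (simp add: addL addR)
  have gf2: "m g f2 = 0" "m f2 g = 0" unfolding g_def using d nb(3) by (simp_all add: addL addR)
  have nbg: "natural_basis2 s m g f2" unfolding natural_basis2_def using gne gind gsp gf2 by simp
  have psg: "pseudo_square s m g f2 = {L, D}"
  proof -
    have h1: "m g g = 1 *s g + (-1) *s f2" using gg unfolding g_def by simp
    have h2: "m f2 f2 = 0 *s g + 0 *s f2" using nb(3) by simp
    show ?thesis unfolding ps_compute[OF gne gind h1 h2] by auto
  qed
  have gne': "f2 \<noteq> g" using gne by simp
  have gind': "independent {f2, g}" using gind by (simp add: insert_commute)
  have psg': "pseudo_square s m f2 g = {T, R}"
  proof -
    have h1: "m g g = (-1) *s f2 + 1 *s g" using gg unfolding g_def by simp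
    have h2: "m f2 f2 = 0 *s f2 + 0 *s g" using nb(3) by simp
    show ?thesis unfolding ps_compute[OF gne' gind' h2 h1] by auto
  qed
  have ps1: "pseudo_square s m f1 f2 = {L}"
  proof -
    have h1: "m f1 f1 = 1 *s f1 + 0 *s f2" using nb(2) by simp
    have h2: "m f2 f2 = 0 *s f1 + 0 *s f2" using nb(3) by simp
    show ?thesis unfolding ps_compute[OF d(1,2) h1 h2] by auto
  qed
  have d1': "f2 \<noteq> f1" using d(1) by simp
  have d2': "independent {f2, f1}" using d(2) by (simp add: insert_commute)
  have ps2: "pseudo_square s m f2 f1 = {R}"
  proof -
    have h1: "m f1 f1 = 0 *s f2 + 1 *s f1" using nb(2) by simp
    have h2: "m f2 f2 = 0 *s f2 + 0 *s f1" using nb(3) by simp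
    show ?thesis unfolding ps_compute[OF d1' d2' h2 h1] by auto
  qed
  have "D7 \<union> D9 \<subseteq> square_of s m"
    unfolding square_of_def D7_def D9_def
    using ps1 ps2 psg psg' nb(1) nbg nb_sym[OF nb(1)] nb_sym[OF nbg] by blast
  moreover have "square_of s m \<subseteq> D7 \<union> D9"
    unfolding square_of_def using sub by blast
  ultimately show ?thesis by blast
qed

end


lemma cor_alg2: "cor_hyps s m \<Longrightarrow> alg2 s m"
  unfolding cor_hyps_def evolution_algebra_def is_algebra_def alg2_def alg2_axioms_def by auto

lemma alg2_M0: "alg2 (pscale :: 'k::field \<Rightarrow> _) M0"
  unfolding alg2_def alg2_axioms_def using vs_pscale
  by (auto simp: M0_def pscale_def algebra_simps)

lemma M0_normal: "natural_basis2 (pscale :: 'k::field \<Rightarrow> _) M0 (1,0) (0,1) \<and>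
   M0 (1,0) (1,0) = ((1::'k),(0::'k)) \<and> M0 (0,1) (0,1) = (0 :: 'k \<times> 'k)"
proof -
  interpret P: alg2 "pscale :: 'k \<Rightarrow> _" M0 by (rule alg2_M0)
  have ne: "((1::'k),(0::'k)) \<noteq> (0,1)" by simp
  have "P.independent {((1::'k),(0::'k)), (0,1)}" unfolding P.indep2[OF ne]
    by (auto simp: pscale_def zero_prod_def)
  moreover have "P.span {((1::'k),(0::'k)), (0,1)} = UNIV" unfolding P.span2_UNIV
  proof
    fix x :: "'k \<times> 'k"
    have "x = pscale (fst x) (1,0) + pscale (snd x) (0,1)" by (simp add: pscale_def prod_eq_iff)
    then show "\<exists>a b. x = pscale a (1,0) + pscale b (0,1)" by blast
  qed
  ultimately show ?thesis unfolding natural_basis2_def using ne by (simp add: M0_def zero_prod_def)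
qed

theorem corollary3p14:
  fixes dummy :: "'k::field"
  shows "(\<exists>m0 :: 'k \<times> 'k \<Rightarrow> 'k \<times> 'k \<Rightarrow> 'k \<times> 'k. cor_hyps pscale m0 \<and>
           (\<forall>(s :: 'k \<Rightarrow> 'v::ab_group_add \<Rightarrow> 'v) m. cor_hyps s m \<longrightarrow> alg_isomorphic s m pscale m0))
       \<and> (\<forall>(s :: 'k \<Rightarrow> 'v \<Rightarrow> 'v) m. cor_hyps s m \<longrightarrow> square_of s m = D7 \<union> D9)"
proof (intro conjI exI[of _ M0] allI impI)
  interpret P: alg2 "pscale :: 'k \<Rightarrow> _" M0 by (rule alg2_M0)
  show "cor_hyps (pscale :: 'k \<Rightarrow> _) M0"
    using P.normal_cor_hyps M0_normal by blast
next
  fix s :: "'k \<Rightarrow> 'v \<Rightarrow> 'v" and m assume h: "cor_hyps s m"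
  interpret A: alg2 s m by (rule cor_alg2[OF h])
  show "alg_isomorphic s m pscale M0"
    using A.normal_form[OF h] A.iso_normal by blast
next
  fix s :: "'k \<Rightarrow> 'v \<Rightarrow> 'v" and m assume h: "cor_hyps s m"
  interpret A: alg2 s m by (rule cor_alg2[OF h])
  show "square_of s m = D7 \<union> D9"
    using A.normal_form[OF h] A.square_normal by blast
qed

end
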